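(* Let $n\ge2$, $v_T=[[1,\dots,n],n+1,\dots,2n-1]\in V_{n,3}$, and for $i\in[n]$ let $v_{R_i}=[[i,n+1,\dots,2n-1],1,\dots,\widehat{i},\dots,n]$. Then \[\eta(v_T)=-\Big(\varphi(v_T)+\sum_{i=1}^n(-1)^{i-1}\varphi(v_{R_i})\Big).\]
   Context: All vector spaces are over $\mathbb C$. $V_{n,3}$ is the $\mathbb C$-span of left-comb brackets $[[x_1,\dots,x_n],y_1,\dots,y_{n-1}]$ with $\{x_i\}\cup\{y_j\}=[2n-1]$, modulo antisymmetry in the $x$'s and separately in the $y$'s; it is identified with $\tilde M^{2^{n-1}1}$ (the span of column tabloids of shape $2^{n-1}1$ modulo antisymmetry within columns) by sending such a bracket to the column tabloid with first column the $x$'s and second column the $y$'s. The map $\varphi:V_{n,3}\to V_{n,3}$ is $\varphi([[x_1,\dots,x_n],y_1,\dots,y_{n-1}])=[[x_1,\dots,x_n],y_1,\dots,y_{n-1}]-\sum_{i=1}^n(-1)^{n-i}[[y_1,\dots,y_{n-1},x_i],x_1,\dots,\widehat{x_i},\dots,x_n]$. The map $\eta$ is the linear map $\eta([t])=(n-1)[t]-\sum_{j=1}^{n-1}\pi^j_{1,1}([t])$, where $\pi^{j}_{1,1}([t])$ is the sum, over all entries $x$ of the first column of $t$, of the column tabloids $[t']$ with $t'$ obtained from $t$ by swapping $x$ with the $j$-th entry of the second column. *)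

theory Defs
  imports Complex_Main
begin

text \<open>Model of V_{n,3} = tilde M^{2^{n-1}1}: a vector is a coefficient function on
  basis elements, indexed by the pair (set of first column, set of second column).
  A column tabloid with ordered columns xs, ys equals the sign of the sorting
  permutation of xs times that of ys times the basis element (sorted columns).\<close>

type_synonym vec = "(nat set \<times> nat set) \<Rightarrow> complex"

definition inversions :: "nat list \<Rightarrow> nat" where
  "inversions xs = card {(i, j). i < j \<and> j < length xs \<and> xs ! i > xs ! j}"

definition list_sign :: "nat list \<Rightarrow> complex" where
  "list_sign xs = (-1) ^ inversions xs"

definition tab :: "nat list \<Rightarrow> nat list \<Rightarrow> vec" where
  "tab xs ys = (\<lambda>S. if S = (set xs, set ys) \<and> distinct xs \<and> distinct ys
                    then list_sign xs * list_sign ys else 0)"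

definition phi_br :: "nat list \<Rightarrow> nat list \<Rightarrow> vec" where
  "phi_br xs ys = (\<lambda>S. tab xs ys S
     - (\<Sum>i = 1..length xs. (-1) ^ (length xs - i)
          * tab (ys @ [xs ! (i - 1)]) (take (i - 1) xs @ drop i xs) S))"

definition pi_br :: "nat \<Rightarrow> nat list \<Rightarrow> nat list \<Rightarrow> vec" where
  "pi_br j xs ys = (\<lambda>S. \<Sum>k = 1..length xs.
      tab (xs[k - 1 := ys ! (j - 1)]) (ys[j - 1 := xs ! (k - 1)]) S)"

definition eta_br :: "nat list \<Rightarrow> nat list \<Rightarrow> vec" where
  "eta_br xs ys = (\<lambda>S. of_nat (length xs - 1) * tab xs ys S
      - (\<Sum>j = 1..length xs - 1. pi_br j xs ys S))"

definition vT_x :: "nat \<Rightarrow> nat list" where "vT_x n = [1..<n+1]"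
definition vT_y :: "nat \<Rightarrow> nat list" where "vT_y n = [n+1..<2*n]"
definition vR_x :: "nat \<Rightarrow> nat \<Rightarrow> nat list" where "vR_x n i = i # [n+1..<2*n]"
definition vR_y :: "nat \<Rightarrow> nat \<Rightarrow> nat list" where
  "vR_y n i = filter (\<lambda>a. a \<noteq> i) [1..<n+1]"

end

theory Submission
  imports Defs
begin

fun inv' :: "nat list \<Rightarrow> nat" where
  "inv' [] = 0"
| "inv' (a # xs) = length (filter (\<lambda>x. x < a) xs) + inv' xs"

lemma inversions_inv': "inversions xs = inv' xs"
proof (induction xs)
  case Nil
  then show ?case by (simp add: inversions_def)
next
  case (Cons a xs)
  let ?P = "{(i, j). i < j \<and> j < length xs \<and> xs ! i > xs ! j}"
  let ?Q = "{j. j < length xs \<and> xs ! j < a}"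
  have eq: "{(i, j). i < j \<and> j < length (a#xs) \<and> (a#xs) ! i > (a#xs) ! j}
      = (\<lambda>j. (0::nat, Suc j)) ` ?Q \<union> (\<lambda>(i,j). (Suc i, Suc j)) ` ?P"
  proof (rule set_eqI, clarify)
    fix i j
    show "((i, j) \<in> {(i, j). i < j \<and> j < length (a#xs) \<and> (a#xs) ! i > (a#xs) ! j}) =
          ((i, j) \<in> (\<lambda>j. (0::nat, Suc j)) ` ?Q \<union> (\<lambda>(i,j). (Suc i, Suc j)) ` ?P)"
      by (cases i; cases j) (auto simp: image_iff)
  qed
  have fP: "finite ?P" by (rule finite_subset[of _ "{..<length xs} \<times> {..<length xs}"]) auto
  have fQ: "finite ?Q" by auto
  have "inversions (a#xs) = card ((\<lambda>j. (0::nat, Suc j)) ` ?Q) + card ((\<lambda>(i,j). (Suc i, Suc j)) ` ?P)"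
    unfolding inversions_def eq
    by (intro card_Un_disjoint finite_imageI fP fQ) auto
  also have "\<dots> = card ?Q + card ?P"
    by (subst card_image, force simp: inj_on_def)+ simp
  also have "card ?Q = length (filter (\<lambda>x. x < a) xs)"
    by (simp add: length_filter_conv_card)
  also have "card ?P = inv' xs" using Cons by (simp add: inversions_def)
  finally show ?case by simp
qed

lemma inv'_sorted: "sorted_wrt (<) xs \<Longrightarrow> inv' xs = 0"
  by (induction xs) (auto simp: filter_empty_conv)

lemma inv'_app_low: "\<forall>x\<in>set xs. \<forall>y\<in>set ys. x < y \<Longrightarrow> inv' (xs @ ys) = inv' xs + inv' ys"
  by (induction xs) (auto simp: filter_empty_conv)

lemma inv'_app_high: "\<forall>x\<in>set xs. \<forall>y\<in>set ys. y < x \<Longrightarrow> inv' (xs @ ys) = inv' xs + inv' ys + length xs * length ys"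
proof (induction xs)
  case (Cons a xs)
  have "filter (\<lambda>x. x < a) (xs @ ys) = filter (\<lambda>x. x < a) xs @ ys"
    using Cons.prems by (simp add: filter_id_conv)
  then show ?case using Cons by simp
qed simp

declare upt_Suc[simp del]

lemma upt_split: "a \<le> i \<Longrightarrow> i \<le> b \<Longrightarrow> [a..<b] = [a..<i] @ [i..<b]"
  using upt_add_eq_append[of a i "b-i"] by simp

definition ee :: "nat set \<Rightarrow> nat set \<Rightarrow> vec" where
  "ee A B = (\<lambda>S. if S = (A, B) then 1 else 0)"

lemma tab_ee: "distinct xs \<Longrightarrow> distinct ys \<Longrightarrow>
   tab xs ys S = (-1) ^ (inv' xs + inv' ys) * ee (set xs) (set ys) S"
  by (simp add: tab_def ee_def list_sign_def inversions_inv' power_add)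

lemma upt_update: "i < b - a \<Longrightarrow> [a..<b][i := v] = [a..<a+i] @ v # [a+i+1..<b]"
proof -
  assume i: "i < b - a"
  have "[a..<b] = [a..<a+i] @ [a+i..<b]" using i by (intro upt_split) auto
  also have "[a+i..<b] = (a+i) # [a+i+1..<b]" using i by (simp add: upt_conv_Cons)
  finally show ?thesis by (simp add: list_update_append)
qed

lemma filter_upt_neq: "a \<le> i \<Longrightarrow> i < b \<Longrightarrow> filter (\<lambda>x. x \<noteq> i) [a..<b] = [a..<i] @ [i+1..<b]"
proof -
  assume h: "a \<le> i" "i < b"
  have "[a..<b] = [a..<i] @ i # [i+1..<b]" using h
    by (subst upt_split[of a i]) (auto simp: upt_conv_Cons)
  then show ?thesis by (simp add: filter_id_conv)
qed

lemma sgnT: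
  assumes "1 \<le> k" "k \<le> n" "1 \<le> j" "j < n"
  shows "tab ((vT_x n)[k - 1 := vT_y n ! (j - 1)]) ((vT_y n)[j - 1 := vT_x n ! (k - 1)]) S
    = (-1) ^ (n - k) * (-1) ^ (j - 1) * ee (insert (n+j) ({1..<n+1} - {k})) (insert k ({n+1..<2*n} - {n+j})) S"
proof -
  have e1: "vT_y n ! (j - 1) = n + j" using assms by (simp add: vT_y_def)
  have e2: "vT_x n ! (k - 1) = k" using assms by (simp add: vT_x_def)
  have l1: "(vT_x n)[k - 1 := n + j] = [1..<k] @ (n+j) # [k+1..<n+1]"
    using assms unfolding vT_x_def by (subst upt_update) auto
  have l2: "(vT_y n)[j - 1 := k] = ([n+1..<n+j] @ [k]) @ [n+j+1..<2*n]"
    using assms unfolding vT_y_def by (subst upt_update) auto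
  have i1: "inv' ([1..<k] @ (n+j) # [k+1..<n+1]) = n - k"
    using assms by (subst inv'_app_low) (auto simp: inv'_sorted filter_True)
  have i2: "inv' (([n+1..<n+j] @ [k]) @ [n+j+1..<2*n]) = j - 1"
    using assms by (subst inv'_app_low, force, subst inv'_app_high) (auto simp: inv'_sorted)
  have s1: "set ([1..<k] @ (n+j) # [k+1..<n+1]) = insert (n+j) ({1..<n+1} - {k})"
    using assms by auto
  have s2: "set (([n+1..<n+j] @ [k]) @ [n+j+1..<2*n]) = insert k ({n+1..<2*n} - {n+j})"
    using assms by auto
  have d1: "distinct ([1..<k] @ (n+j) # [k+1..<n+1])" using assms by auto
  have d2: "distinct (([n+1..<n+j] @ [k]) @ [n+j+1..<2*n])" using assms by auto
  show ?thesis unfolding e1 e2 l1 l2 tab_ee[OF d1 d2] i1 i2 s1 s2 by (simp add: power_add)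
qed

lemma vR_y_eq: "1 \<le> i \<Longrightarrow> i \<le> n \<Longrightarrow> vR_y n i = [1..<i] @ [i+1..<n+1]"
  unfolding vR_y_def by (rule filter_upt_neq) auto

lemma sgnG:
  assumes "1 \<le> i" "i \<le> n" "1 \<le> m" "m < n"
  shows "tab (vR_y n i @ [vR_x n i ! m]) (take m (vR_x n i) @ drop (m+1) (vR_x n i)) S
    = ee (insert (n+m) ({1..<n+1} - {i})) (insert i ({n+1..<2*n} - {n+m})) S"
proof -
  have e1: "vR_x n i ! m = n + m" using assms by (cases m) (auto simp: vR_x_def)
  have e2: "take m (vR_x n i) @ drop (m+1) (vR_x n i) = i # [n+1..<n+m] @ [n+m+1..<2*n]"
    using assms by (cases m) (auto simp: vR_x_def)
  have d1: "distinct ([1..<i] @ [i+1..<n+1] @ [n+m])" using assms by auto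
  have d2: "distinct (i # [n+1..<n+m] @ [n+m+1..<2*n])" using assms by auto
  have i1: "inv' ([1..<i] @ [i+1..<n+1] @ [n+m]) = 0"
    using assms by (intro inv'_sorted) (auto simp: sorted_wrt_append)
  have i2: "inv' (i # [n+1..<n+m] @ [n+m+1..<2*n]) = 0"
    using assms by (intro inv'_sorted) (auto simp: sorted_wrt_append)
  have s1: "set ([1..<i] @ [i+1..<n+1] @ [n+m]) = insert (n+m) ({1..<n+1} - {i})"
    using assms by auto
  have s2: "set (i # [n+1..<n+m] @ [n+m+1..<2*n]) = insert i ({n+1..<2*n} - {n+m})"
    using assms by auto
  show ?thesis unfolding e1 e2 vR_y_eq[OF assms(1,2)] append_assoc
    tab_ee[OF d1 d2] i1 i2 s1 s2 by simp
qed

lemma sgnG':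
  assumes "Suc 0 \<le> i" "i \<le> n" "Suc 0 \<le> m" "m \<le> n - Suc 0"
  shows "tab (vR_y n i @ [vR_x n i ! m]) (take m (vR_x n i) @ drop (Suc m) (vR_x n i)) S
    = ee (insert (n+m) ({1..<n+1} - {i})) (insert i ({n+1..<2*n} - {n+m})) S"
  using sgnG[of i n m S] assms by simp

lemma sgnF1:
  assumes "1 \<le> i" "i \<le> n"
  shows "tab (vR_y n i @ [vR_x n i ! 0]) (take 0 (vR_x n i) @ drop 1 (vR_x n i)) S
    = (-1) ^ (n - i) * ee {1..<n+1} {n+1..<2*n} S"
proof -
  have d1: "distinct ([1..<i] @ [i+1..<n+1] @ [i])" using assms by auto
  have d2: "distinct [n+1..<2*n]" by simp
  have i1: "inv' ([1..<i] @ [i+1..<n+1] @ [i]) = n - i"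
    using assms by (subst inv'_app_low, force, subst inv'_app_high) (auto simp: inv'_sorted)
  have s1: "set ([1..<i] @ [i+1..<n+1] @ [i]) = {1..<n+1}" using assms by auto
  have e1: "vR_y n i @ [vR_x n i ! 0] = [1..<i] @ [i+1..<n+1] @ [i]"
    unfolding vR_y_eq[OF assms(1,2)] by (simp add: vR_x_def)
  have e2: "take 0 (vR_x n i) @ drop 1 (vR_x n i) = [n+1..<2*n]" by (simp add: vR_x_def)
  show ?thesis unfolding e1 e2 tab_ee[OF d1 d2] i1 s1 by (simp add: inv'_sorted)
qed

lemma sgnF0:
  assumes "1 \<le> i" "i \<le> n"
  shows "tab (vR_x n i) (vR_y n i) S = ee (insert i {n+1..<2*n}) ({1..<n+1} - {i}) S"
proof -
  have d1: "distinct (i # [n+1..<2*n])" using assms by auto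
  have d2: "distinct ([1..<i] @ [i+1..<n+1])" using assms by auto
  have i1: "inv' (i # [n+1..<2*n]) = 0" using assms by (intro inv'_sorted) auto
  have i2: "inv' ([1..<i] @ [i+1..<n+1]) = 0"
    using assms by (intro inv'_sorted) (auto simp: sorted_wrt_append)
  have s2: "set ([1..<i] @ [i+1..<n+1]) = {1..<n+1} - {i}" using assms by auto
  show ?thesis unfolding vR_y_eq[OF assms(1,2)] vR_x_def
     tab_ee[OF d1 d2] i1 i2 s2 by simp
qed

lemma sgnTv:
  assumes "1 \<le> i" "i \<le> n"
  shows "tab (vT_y n @ [vT_x n ! (i - 1)]) (take (i - 1) (vT_x n) @ drop i (vT_x n)) S
    = (-1) ^ (n - 1) * ee (insert i {n+1..<2*n}) ({1..<n+1} - {i}) S"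
proof -
  have e1: "vT_x n ! (i - 1) = i" using assms by (simp add: vT_x_def)
  have e2: "take (i - 1) (vT_x n) @ drop i (vT_x n) = [1..<i] @ [i+1..<n+1]"
    using assms by (simp add: vT_x_def)
  have d1: "distinct ([n+1..<2*n] @ [i])" using assms by auto
  have d2: "distinct ([1..<i] @ [i+1..<n+1])" using assms by auto
  have i1: "inv' ([n+1..<2*n] @ [i]) = n - 1"
    using assms by (subst inv'_app_high) (auto simp: inv'_sorted)
  have i2: "inv' ([1..<i] @ [i+1..<n+1]) = 0"
    using assms by (intro inv'_sorted) (auto simp: sorted_wrt_append)
  have s1: "set ([n+1..<2*n] @ [i]) = insert i {n+1..<2*n}" using assms by auto
  have s2: "set ([1..<i] @ [i+1..<n+1]) = {1..<n+1} - {i}" using assms by auto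
  show ?thesis unfolding e1 e2 vT_y_def
    tab_ee[OF d1 d2] i1 i2 s1 s2 by simp
qed

lemma sgnE0: "tab (vT_x n) (vT_y n) S = ee {1..<n+1} {n+1..<2*n} S"
  unfolding vT_x_def vT_y_def by (simp add: tab_ee inv'_sorted)

lemma neg1_eq: "even (a + b) \<Longrightarrow> (-1::complex) ^ a = (-1) ^ b"
  by (simp add: minus_one_power_iff)
lemma neg1_neg: "odd (a + b) \<Longrightarrow> (-1::complex) ^ a = - ((-1) ^ b)"
  by (simp add: minus_one_power_iff)

lemma sum_split1: "1 \<le> (n::nat) \<Longrightarrow> (\<Sum>p = 1..n. f p) = f 1 + (\<Sum>m = 1..n-1. f (m+1))"
proof -
  assume "1 \<le> n"
  then obtain q where q: "n = Suc q" by (cases n) auto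
  have "(\<Sum>p = 1..n. f p) = f 1 + (\<Sum>p = Suc 1..Suc q. f p)"
    unfolding q by (subst sum.atLeast_Suc_atMost) auto
  also have "(\<Sum>p = Suc 1..Suc q. f p) = (\<Sum>m = 1..q. f (Suc m))"
    by (rule sum.shift_bounds_cl_Suc_ivl)
  finally show ?thesis using q by simp
qed

theorem mainTheorem7:
  fixes n :: nat
  assumes "n \<ge> 2"
  shows "eta_br (vT_x n) (vT_y n) =
    (\<lambda>S. - (phi_br (vT_x n) (vT_y n) S
       + (\<Sum>i = 1..n. (-1) ^ (i - 1) * phi_br (vR_x n i) (vR_y n i) S)))"
proof
  fix S
  define a where "a = ee {1..<n+1} {n+1..<2*n} S"
  define b where "b i = ee (insert i {n+1..<2*n}) ({1..<n+1} - {i}) S" for i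
  define c where "c k j = ee (insert (n+j) ({1..<n+1} - {k})) (insert k ({n+1..<2*n} - {n+j})) S" for k j
  have lx: "length (vT_x n) = n" by (simp add: vT_x_def)
  have lR: "length (vR_x n i) = n" for i using assms by (simp add: vR_x_def)
  have L: "eta_br (vT_x n) (vT_y n) S = of_nat (n-1) * a
      - (\<Sum>j = 1..n-1. \<Sum>k = 1..n. (-1) ^ (n - k) * (-1) ^ (j - 1) * c k j)"
    unfolding eta_br_def pi_br_def lx a_def c_def sgnE0
    by (intro arg_cong2[where f="(-)"] refl sum.cong sgnT) auto
  have P: "phi_br (vT_x n) (vT_y n) S = a - (\<Sum>i = 1..n. (-1) ^ (i - 1) * b i)"
    unfolding phi_br_def lx a_def sgnE0
  proof (intro arg_cong2[where f="(-)"] refl sum.cong)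
    fix i assume i: "i \<in> {1..n}"
    have "(-1::complex) ^ (n - i) * (-1) ^ (n - 1) = (-1) ^ (n - i + (n - 1))" by (simp add: power_add)
    also have "\<dots> = (-1) ^ (i - 1)" using i by (intro neg1_eq) auto
    finally have sg: "(-1::complex) ^ (n - i) * (-1) ^ (n - 1) = (-1) ^ (i - 1)" .
    show "(-1) ^ (n - i) * tab (vT_y n @ [vT_x n ! (i - 1)]) (take (i - 1) (vT_x n) @ drop i (vT_x n)) S
       = (-1) ^ (i - 1) * b i"
    proof -
      have i1: "1 \<le> i" "i \<le> n" using i by auto
      show ?thesis unfolding sgnTv[OF i1] b_def by (metis mult.assoc sg)
    qed
  qed
  have R: "(-1) ^ (i - 1) * phi_br (vR_x n i) (vR_y n i) S =
      (-1) ^ (i - 1) * b i - a + (\<Sum>m = 1..n-1. (-1) ^ (n - i) * (-1) ^ (m - 1) * c i m)"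
    if i: "1 \<le> i" "i \<le> n" for i
  proof -
    have sp: "(\<Sum>p = 1..n. (-1) ^ (n - p) * tab (vR_y n i @ [vR_x n i ! (p - 1)])
          (take (p - 1) (vR_x n i) @ drop p (vR_x n i)) S)
        = (-1) ^ (n - 1) * ((-1) ^ (n - i) * a)
          + (\<Sum>m = 1..n-1. (-1) ^ (n - (m+1)) * c i m)"
      using assms i
      by (subst sum_split1) (auto simp: sgnF1[simplified] sgnG' a_def c_def intro!: sum.cong)
    have s2: "(-1::complex) ^ (i - 1) * ((-1) ^ (n - 1) * (-1) ^ (n - i)) = 1"
    proof -
      have "(-1::complex) ^ (i - 1) * ((-1) ^ (n - 1) * (-1) ^ (n - i)) = (-1) ^ ((i - 1) + (n - 1) + (n - i))"
        by (simp add: power_add)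
      also have "\<dots> = (-1) ^ 0" using i by (intro neg1_eq) auto
      finally show ?thesis by simp
    qed
    have s3: "(-1::complex) ^ (i - 1) * (-1) ^ (n - (m+1)) = - ((-1) ^ (n - i) * (-1) ^ (m - 1))"
      if m: "m \<in> {1..n-1}" for m
    proof -
      have "(-1::complex) ^ (i - 1) * (-1) ^ (n - (m+1)) = (-1) ^ ((i - 1) + (n - (m+1)))"
        by (simp add: power_add)
      also have "\<dots> = - ((-1) ^ ((n - i) + (m - 1)))" using i m by (intro neg1_neg) auto
      finally show ?thesis by (simp add: power_add)
    qed
    have "(-1) ^ (i - 1) * phi_br (vR_x n i) (vR_y n i) S
        = (-1) ^ (i - 1) * b i - ((-1) ^ (i - 1) * ((-1) ^ (n - 1) * (-1) ^ (n - i))) * a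
          - (\<Sum>m = 1..n-1. (-1) ^ (i - 1) * (-1) ^ (n - (m+1)) * c i m)"
      unfolding phi_br_def lR sp using i
      by (simp add: sgnF0 b_def algebra_simps sum_distrib_left)
    also have "\<dots> = (-1) ^ (i - 1) * b i - a + (\<Sum>m = 1..n-1. (-1) ^ (n - i) * (-1) ^ (m - 1) * c i m)"
    proof -
      have "(\<Sum>m = 1..n-1. (-1) ^ (i - 1) * (-1) ^ (n - (m+1)) * c i m)
          = (\<Sum>m = 1..n-1. - ((-1) ^ (n - i) * (-1) ^ (m - 1) * c i m))"
      proof (rule sum.cong[OF refl])
        fix m assume m: "m \<in> {1..n-1}"
        show "(-1) ^ (i - 1) * (-1) ^ (n - (m+1)) * c i m = - ((-1) ^ (n - i) * (-1) ^ (m - 1) * c i m)"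
          by (simp only: s3[OF m]) simp
      qed
      then show ?thesis unfolding s2 by (simp add: sum_negf)
    qed
    finally show ?thesis .
  qed
  have "(\<Sum>i = 1..n. (-1) ^ (i - 1) * phi_br (vR_x n i) (vR_y n i) S)
      = (\<Sum>i = 1..n. (-1) ^ (i - 1) * b i - a + (\<Sum>m = 1..n-1. (-1) ^ (n - i) * (-1) ^ (m - 1) * c i m))"
    by (rule sum.cong[OF refl], rule R) auto
  also have "\<dots> = (\<Sum>i = 1..n. (-1) ^ (i - 1) * b i) - of_nat n * a
      + (\<Sum>i = 1..n. \<Sum>m = 1..n-1. (-1) ^ (n - i) * (-1) ^ (m - 1) * c i m)"
    by (simp add: sum.distrib sum_subtractf)
  also have "(\<Sum>i = 1..n. \<Sum>m = 1..n-1. (-1) ^ (n - i) * (-1) ^ (m - 1) * c i m)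
      = (\<Sum>m = 1..n-1. \<Sum>i = 1..n. (-1) ^ (n - i) * (-1) ^ (m - 1) * c i m)"
    by (rule sum.swap)
  finally have Rs: "(\<Sum>i = 1..n. (-1) ^ (i - 1) * phi_br (vR_x n i) (vR_y n i) S)
     = (\<Sum>i = 1..n. (-1) ^ (i - 1) * b i) - of_nat n * a
      + (\<Sum>m = 1..n-1. \<Sum>i = 1..n. (-1) ^ (n - i) * (-1) ^ (m - 1) * c i m)" .
  have nn: "(of_nat (n - 1) :: complex) = of_nat n - 1" using assms by (simp add: of_nat_diff)
  show "eta_br (vT_x n) (vT_y n) S = - (phi_br (vT_x n) (vT_y n) S
       + (\<Sum>i = 1..n. (-1) ^ (i - 1) * phi_br (vR_x n i) (vR_y n i) S))"
    unfolding L P Rs nn by (simp add: algebra_simps)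
qed

end
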